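(* Let $n\ge2$, $m\ge2$ be integers with $m\ge\sqrt n$, let $B_1,\ldots,B_m$ be mutually unbiased orthonormal bases of $\mathbb{C}^n$, let $\mathfrak{B}=\bigsqcup_{i=1}^m B_i$, and let $p,l$ be positive integers. If $\gamma:\{0,\ldots,l\}\to\{1,\ldots,p\}$ is a closed path, then $$W_\gamma=\begin{cases} n^{1-v_\gamma} & \text{if }\gamma\in\Gamma_l,\\[2pt] O_l\!\left(n^{1-v_\gamma}\left(\frac1m+\frac1n\right)\right) & \text{if }\gamma\notin\Gamma_l,\end{cases}$$ where the implied constant depends only on $l$.
   Context: Orthonormal bases $B_1,\ldots,B_m$ of $\mathbb{C}^n$ are mutually unbiased if $|\langle u,v\rangle|=\frac{1}{\sqrt n}$ for all $u\in B_i$, $v\in B_j$, $i\ne j$, where $\langle\cdot,\cdot\rangle$ is the standard Hermitian inner product. A closed path is a map $\gamma:\{0,\ldots,l\}\to\{1,\ldots,p\}$ with $\gamma(0)=\gamma(l)$; $V_\gamma=\gamma(\{0,\ldots,l\})$, $v_\gamma=\#V_\gamma$. For $s:V_\gamma\to\mathfrak{B}$ put $\omega_\gamma(s)=\prod_{i=0}^{l-1}\langle s(\gamma(i)),s(\gamma(i+1))\rangle$, and let $W_\gamma$ be the average of $\omega_\gamma(s)$ over all $(mn)^{v_\gamma}$ maps $s:V_\gamma\to\mathfrak{B}$. Identify a closed path of length $l$ with the cyclic word $(\gamma(0),\gamma(1),\ldots,\gamma(l-1))$ (indices taken mod $l$). The following two moves each produce a closed path of length $l-1$ by deleting one entry of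 the cyclic word: (Move 1) if $l\ge2$ and two cyclically consecutive entries are equal, delete one of them; (Move 2) if $l\ge2$ and some value occurs exactly once in the cyclic word, delete that entry. $\Gamma_l$ denotes the set of closed paths of length $l$ that can be transformed by a finite sequence of such moves into a closed path of length $1$ (a single vertex with a loop); these are the paths corresponding to "double trees" in the standard proof of the Marchenko–Pastur law. *)

theory Defs
  imports Complex_Main "HOL-Library.FuncSet"
begin

text \<open>Vectors of C^n are represented as functions nat => complex; only the
  coordinates 0..n-1 are relevant.\<close>
definition cinner :: "nat \<Rightarrow> (nat \<Rightarrow> complex) \<Rightarrow> (nat \<Rightarrow> complex) \<Rightarrow> complex" where
  "cinner n u v = (\<Sum>j<n. u j * cnj (v j))"

definition orthonormal_basis :: "nat \<Rightarrow> (nat \<Rightarrow> nat \<Rightarrow> complex) \<Rightarrow> bool" where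
  "orthonormal_basis n b \<longleftrightarrow>
     (\<forall>j<n. \<forall>k<n. cinner n (b j) (b k) = (if j = k then 1 else 0)) \<and>
     (\<forall>v :: nat \<Rightarrow> complex. \<exists>c :: nat \<Rightarrow> complex. \<forall>t<n. v t = (\<Sum>k<n. c k * b k t))"

text \<open>B i k is the k-th vector of the i-th basis (i < m, k < n).  The bases
  B 0, ..., B (m-1) are mutually unbiased orthonormal bases of C^n.\<close>
definition mutually_unbiased :: "nat \<Rightarrow> nat \<Rightarrow> (nat \<Rightarrow> nat \<Rightarrow> nat \<Rightarrow> complex) \<Rightarrow> bool" where
  "mutually_unbiased n m B \<longleftrightarrow>
     (\<forall>i<m. orthonormal_basis n (B i)) \<and>
     (\<forall>i<m. \<forall>j<m. i \<noteq> j \<longrightarrow> (\<forall>k<n. \<forall>k'<n. cmod (cinner n (B i k) (B j k')) = 1 / sqrt (real n)))"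

definition closed_path :: "nat \<Rightarrow> nat \<Rightarrow> (nat \<Rightarrow> nat) \<Rightarrow> bool" where
  "closed_path p l \<gamma> \<longleftrightarrow> (\<forall>i\<le>l. \<gamma> i \<in> {1..p}) \<and> \<gamma> 0 = \<gamma> l"

definition Vg :: "nat \<Rightarrow> (nat \<Rightarrow> nat) \<Rightarrow> nat set" where
  "Vg l \<gamma> = \<gamma> ` {0..l}"

definition vg :: "nat \<Rightarrow> (nat \<Rightarrow> nat) \<Rightarrow> nat" where
  "vg l \<gamma> = card (Vg l \<gamma>)"

text \<open>The disjoint union of the bases is indexed by pairs (i,k), i < m, k < n.\<close>
definition omega :: "nat \<Rightarrow> (nat \<Rightarrow> nat \<Rightarrow> nat \<Rightarrow> complex) \<Rightarrow> nat \<Rightarrow> (nat \<Rightarrow> nat)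
    \<Rightarrow> (nat \<Rightarrow> nat \<times> nat) \<Rightarrow> complex" where
  "omega n B l \<gamma> s = (\<Prod>i<l. cinner n (B (fst (s (\<gamma> i))) (snd (s (\<gamma> i))))
                                     (B (fst (s (\<gamma> (Suc i)))) (snd (s (\<gamma> (Suc i))))))"

definition W :: "nat \<Rightarrow> nat \<Rightarrow> (nat \<Rightarrow> nat \<Rightarrow> nat \<Rightarrow> complex) \<Rightarrow> nat \<Rightarrow> (nat \<Rightarrow> nat) \<Rightarrow> complex" where
  "W n m B l \<gamma> =
     (\<Sum>s\<in>(Vg l \<gamma> \<rightarrow>\<^sub>E ({..<m} \<times> {..<n})). omega n B l \<gamma> s)
       / of_nat ((m * n) ^ vg l \<gamma>)"

text \<open>Cyclic words and the two reduction moves.  A list xs represents the cyclic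
  word (indices mod length xs).  del i xs deletes the entry at position i.\<close>
definition del :: "nat \<Rightarrow> 'a list \<Rightarrow> 'a list" where
  "del i xs = take i xs @ drop (Suc i) xs"

inductive reducible :: "nat list \<Rightarrow> bool" where
  base: "length xs = 1 \<Longrightarrow> reducible xs"
| move1a: "\<lbrakk>length xs \<ge> 2; i < length xs; xs ! i = xs ! ((Suc i) mod length xs);
            reducible (del i xs)\<rbrakk> \<Longrightarrow> reducible xs"
| move1b: "\<lbrakk>length xs \<ge> 2; i < length xs; xs ! i = xs ! ((Suc i) mod length xs);
            reducible (del ((Suc i) mod length xs) xs)\<rbrakk> \<Longrightarrow> reducible xs"
| move2: "\<lbrakk>length xs \<ge> 2; i < length xs; length (filter (\<lambda>y. y = xs ! i) xs) = 1;
            reducible (del i xs)\<rbrakk> \<Longrightarrow> reducible xs"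

definition in_Gamma :: "nat \<Rightarrow> (nat \<Rightarrow> nat) \<Rightarrow> bool" where
  "in_Gamma l \<gamma> \<longleftrightarrow> reducible (map \<gamma> [0..<l])"

end

theory Submission
  imports Defs
begin

definition cp :: "('a \<Rightarrow> 'a \<Rightarrow> 'b::comm_monoid_mult) \<Rightarrow> 'a list \<Rightarrow> 'b" where
  "cp f xs = (\<Prod>i<length xs. f (xs!i) (xs!(Suc i mod length xs)))"

definition lp :: "('a \<Rightarrow> 'a \<Rightarrow> 'b::comm_monoid_mult) \<Rightarrow> 'a list \<Rightarrow> 'b" where
  "lp f xs = (\<Prod>i<length xs - 1. f (xs!i) (xs!(Suc i)))"

lemma cp_rotate1: "cp f (rotate1 xs) = cp f xs"
proof (cases xs)
  case Nil thus ?thesis by simp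
next
  case (Cons a zs)
  define L where "L = length xs"
  define h where "h i = f (xs!i) (xs!(Suc i mod L))" for i
  have L: "L = Suc (length zs)" using Cons L_def by simp
  have r: "\<And>i. i<L \<Longrightarrow> rotate1 xs ! i = xs ! (Suc i mod L)" using nth_rotate1 L_def by metis
  have pos: "\<And>i. Suc i mod L < L" using L by simp
  have "cp f (rotate1 xs) = (\<Prod>i<L. f (rotate1 xs ! i) (rotate1 xs ! (Suc i mod L)))"
    unfolding cp_def L_def by simp
  also have "\<dots> = (\<Prod>i<L. h (Suc i mod L))"
    unfolding h_def by (intro prod.cong refl) (simp add: r pos)
  also have "\<dots> = (\<Prod>i<length zs. h (Suc i)) * h 0"
    unfolding L by (simp add: prod.lessThan_Suc)
  also have "\<dots> = (\<Prod>i<L. h i)"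
    unfolding L by (subst prod.lessThan_Suc_shift) (simp add: mult.commute del: prod.lessThan_Suc)
  also have "\<dots> = cp f xs" unfolding cp_def h_def L_def by simp
  finally show ?thesis .
qed

lemma cp_rotate: "cp f (rotate k xs) = cp f xs"
  by (induction k) (simp_all add: cp_rotate1)

lemma cp_head:
  assumes "zs \<noteq> []"
  shows "cp f (a#zs) = f a (hd zs) * lp f zs * f (last zs) a"
    and "cp f zs = lp f zs * f (last zs) (hd zs)"
proof -
  obtain J where J: "length zs = Suc J" using assms by (cases zs) auto
  have hd: "hd zs = zs!0" using assms by (simp add: hd_conv_nth)
  have last: "last zs = zs!J" using assms J by (simp add: last_conv_nth)
  have lp: "lp f zs = (\<Prod>i<J. f (zs!i) (zs!(Suc i)))" unfolding lp_def J by simp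
  have "cp f (a#zs) = f a (zs!0) * (\<Prod>i<Suc J. f (zs!i) ((a#zs)!(Suc (Suc i) mod Suc (Suc J))))"
    unfolding cp_def using J by (simp add: prod.lessThan_Suc_shift del: prod.lessThan_Suc)
  also have "(\<Prod>i<Suc J. f (zs!i) ((a#zs)!(Suc (Suc i) mod Suc (Suc J)))) = lp f zs * f (zs!J) a"
    unfolding lp by (simp add: prod.lessThan_Suc)
  finally show "cp f (a#zs) = f a (hd zs) * lp f zs * f (last zs) a"
    using hd last by (simp add: mult.assoc)
  have "cp f zs = (\<Prod>i<Suc J. f (zs!i) (zs!(Suc i mod Suc J)))" unfolding cp_def J by simp
  also have "\<dots> = lp f zs * f (zs!J) (zs!0)"
    unfolding lp by (simp add: prod.lessThan_Suc)
  finally show "cp f zs = lp f zs * f (last zs) (hd zs)" using hd last by simp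
qed

lemma cp_cong: "(\<And>x y. x \<in> set xs \<Longrightarrow> y \<in> set xs \<Longrightarrow> f x y = g x y) \<Longrightarrow> cp f xs = cp g xs"
  unfolding cp_def by (intro prod.cong refl) (metis lessThan_iff nth_mem mod_less_divisor gr_zeroI less_zeroE)

lemma rotate_del: assumes "i < length xs"
  shows "rotate i xs = xs!i # rotate i (del i xs)"
proof -
  have lt: "length (take i xs) = i" using assms by simp
  have "rotate i (del i xs) = drop (Suc i) xs @ take i xs"
    unfolding del_def using rotate_append[of "take i xs" "drop (Suc i) xs"] lt by simp
  moreover have "rotate i xs = drop i xs @ take i xs"
    using assms by (simp add: rotate_drop_take)
  moreover have "drop i xs = xs!i # drop (Suc i) xs" using assms by (simp add: Cons_nth_drop_Suc)
  ultimately show ?thesis by simp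
qed

lemma length_del: "i < length xs \<Longrightarrow> length (del i xs) = length xs - 1"
  unfolding del_def by simp

lemma length_filter_rotate: "length (filter P (rotate k xs)) = length (filter P xs)"
proof (induction k)
  case 0 then show ?case by simp
next
  case (Suc k)
  have "length (filter P (rotate1 ys)) = length (filter P ys)" for ys :: "'a list"
    by (cases ys) auto
  then show ?case using Suc by simp
qed

lemma lp_cong: "(\<And>x y. x \<in> set xs \<Longrightarrow> y \<in> set xs \<Longrightarrow> f x y = g x y) \<Longrightarrow> lp f xs = lp g xs"
  unfolding lp_def by (intro prod.cong refl) (simp add: nth_mem)

definition Bv :: "(nat \<Rightarrow> nat \<Rightarrow> nat \<Rightarrow> complex) \<Rightarrow> (nat \<Rightarrow> nat \<times> nat) \<Rightarrow> nat \<Rightarrow> nat \<Rightarrow> complex" where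
  "Bv B s x = B (fst (s x)) (snd (s x))"

definition Wl :: "nat \<Rightarrow> nat \<Rightarrow> (nat \<Rightarrow> nat \<Rightarrow> nat \<Rightarrow> complex) \<Rightarrow> nat list \<Rightarrow> complex" where
  "Wl n m B xs = (\<Sum>s\<in>set xs \<rightarrow>\<^sub>E ({..<m} \<times> {..<n}). cp (\<lambda>a b. cinner n (Bv B s a) (Bv B s b)) xs)
       / of_nat ((m * n) ^ card (set xs))"

lemma Wl_rotate: "Wl n m B (rotate k xs) = Wl n m B xs"
  unfolding Wl_def by (simp add: cp_rotate)

lemma parseval:
  assumes "orthonormal_basis n b"
  shows "(\<Sum>k<n. cinner n w (b k) * cinner n (b k) u) = cinner n w u"
proof -
  obtain c where c: "\<forall>t<n. w t = (\<Sum>k<n. c k * b k t)"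
    using assms unfolding orthonormal_basis_def by blast
  have orth: "\<forall>j<n. \<forall>k<n. cinner n (b j) (b k) = (if j = k then 1 else 0)"
    using assms unfolding orthonormal_basis_def by blast
  have expand: "cinner n w v = (\<Sum>k<n. c k * cinner n (b k) v)" for v
  proof -
    have "cinner n w v = (\<Sum>t<n. (\<Sum>k<n. c k * b k t) * cnj (v t))"
      unfolding cinner_def using c by (intro sum.cong refl) simp
    also have "\<dots> = (\<Sum>t<n. \<Sum>k<n. c k * (b k t * cnj (v t)))"
      by (simp add: sum_distrib_right mult.assoc)
    also have "\<dots> = (\<Sum>k<n. \<Sum>t<n. c k * (b k t * cnj (v t)))"
      by (rule sum.swap)
    also have "\<dots> = (\<Sum>k<n. c k * cinner n (b k) v)"
      unfolding cinner_def by (simp add: sum_distrib_left)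
    finally show ?thesis .
  qed
  have cw: "cinner n w (b j) = c j" if "j < n" for j
  proof -
    have "cinner n w (b j) = (\<Sum>k<n. c k * (if k = j then 1 else 0))"
      unfolding expand using orth that by (intro sum.cong refl) simp
    also have "\<dots> = c j" using that by (simp add: if_distrib cong: if_cong)
    finally show ?thesis .
  qed
  show ?thesis unfolding expand[of u] by (intro sum.cong refl) (simp add: cw)
qed

lemma self_inner:
  assumes "mutually_unbiased n m B" "a \<in> {..<m} \<times> {..<n}"
  shows "cinner n (B (fst a) (snd a)) (B (fst a) (snd a)) = 1"
  using assms unfolding mutually_unbiased_def orthonormal_basis_def by auto

lemma entry_bound:
  assumes "mutually_unbiased n m B" "a \<in> {..<m} \<times> {..<n}" "b \<in> {..<m} \<times> {..<n}"
  shows "cmod (cinner n (B (fst a) (snd a)) (B (fst b) (snd b))) \<le> (if a = b then 1 else 1 / sqrt (real n))"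
proof (cases "a = b")
  case True then show ?thesis using self_inner[OF assms(1,2)] by simp
next
  case False
  show ?thesis
  proof (cases "fst a = fst b")
    case True
    then have "snd a \<noteq> snd b" using False by (metis prod.collapse)
    then have "cinner n (B (fst a) (snd a)) (B (fst b) (snd b)) = 0"
      using assms True unfolding mutually_unbiased_def orthonormal_basis_def by auto
    then show ?thesis using False by simp
  next
    case False2: False
    then show ?thesis using assms False unfolding mutually_unbiased_def by auto
  qed
qed

lemma Wl_H1:
  assumes mu: "mutually_unbiased n m B" and zs: "zs \<noteq> []" and a: "a = hd zs \<or> a = last zs"
  shows "Wl n m B (a # zs) = Wl n m B zs"
proof -
  have ain: "a \<in> set zs" using a zs by auto
  then have set: "set (a # zs) = set zs" by auto
  have "cp (\<lambda>x y. cinner n (Bv B s x) (Bv B s y)) (a # zs) = cp (\<lambda>x y. cinner n (Bv B s x) (Bv B s y)) zs"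
    if s: "s \<in> set zs \<rightarrow>\<^sub>E ({..<m} \<times> {..<n})" for s
  proof -
    have "s a \<in> {..<m} \<times> {..<n}" using s ain by blast
    then have one: "cinner n (Bv B s a) (Bv B s a) = 1" unfolding Bv_def by (rule self_inner[OF mu])
    show ?thesis unfolding cp_head[OF zs] using a one by (auto simp: mult_ac)
  qed
  then show ?thesis unfolding Wl_def set by (intro arg_cong2[where f="(/)"] sum.cong refl) auto
qed

lemma Wl_H2:
  assumes mu: "mutually_unbiased n m B" and zs: "zs \<noteq> []" and a: "a \<notin> set zs"
  shows "Wl n m B (a # zs) = Wl n m B zs / of_nat n"
proof -
  define A where "A = {..<m} \<times> {..<n}"
  define V where "V = set zs"
  define F where "F s = (\<lambda>x y. cinner n (Bv B s x) (Bv B s y))" for s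
  have aV: "a \<notin> V" using a V_def by simp
  have ons: "\<forall>i<m. orthonormal_basis n (B i)" using mu unfolding mutually_unbiased_def by blast
  have key: "(\<Sum>y\<in>A. cp (F (g(a := y))) (a # zs)) = of_nat m * cp (F g) zs" if g: "g \<in> V \<rightarrow>\<^sub>E A" for g
  proof -
    define w where "w = Bv B g (last zs)"
    define u where "u = Bv B g (hd zs)"
    have hdV: "hd zs \<in> V" and lastV: "last zs \<in> V" using zs V_def by auto
    have lpeq: "lp (F (g(a := y))) zs = lp (F g) zs" for y
      by (rule lp_cong) (use aV V_def in \<open>auto simp: F_def Bv_def\<close>)
    have "cp (F (g(a := y))) (a # zs) = cinner n (B (fst y) (snd y)) u * lp (F g) zs * cinner n w (B (fst y) (snd y))" for y
      unfolding cp_head[OF zs] lpeq using aV hdV lastV by (auto simp: F_def Bv_def u_def w_def)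
    then have "(\<Sum>y\<in>A. cp (F (g(a := y))) (a # zs)) = lp (F g) zs * (\<Sum>y\<in>A. cinner n w (B (fst y) (snd y)) * cinner n (B (fst y) (snd y)) u)"
      by (simp add: sum_distrib_left mult_ac)
    also have "(\<Sum>y\<in>A. cinner n w (B (fst y) (snd y)) * cinner n (B (fst y) (snd y)) u) = (\<Sum>i<m. \<Sum>k<n. cinner n w (B i k) * cinner n (B i k) u)"
      unfolding A_def by (simp add: sum.cartesian_product case_prod_beta)
    also have "\<dots> = (\<Sum>i<m. cinner n w u)"
      using ons by (intro sum.cong refl) (simp add: parseval)
    also have "\<dots> = of_nat m * cinner n w u" by simp
    finally show ?thesis unfolding cp_head[OF zs] by (simp add: F_def u_def w_def mult_ac)
  qed
  have "(\<Sum>s\<in>insert a V \<rightarrow>\<^sub>E A. cp (F s) (a # zs)) = (\<Sum>(y,g)\<in>A \<times> (V \<rightarrow>\<^sub>E A). cp (F (g(a := y))) (a # zs))"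
    unfolding PiE_insert_eq
    by (subst sum.reindex[OF inj_combinator[OF aV]]) (simp add: case_prod_unfold)
  also have "\<dots> = (\<Sum>y\<in>A. \<Sum>g\<in>V \<rightarrow>\<^sub>E A. cp (F (g(a := y))) (a # zs))"
    by (simp add: sum.cartesian_product)
  also have "\<dots> = (\<Sum>g\<in>V \<rightarrow>\<^sub>E A. \<Sum>y\<in>A. cp (F (g(a := y))) (a # zs))"
    by (rule sum.swap)
  also have "\<dots> = of_nat m * (\<Sum>g\<in>V \<rightarrow>\<^sub>E A. cp (F g) zs)"
    using key by (simp add: sum_distrib_left)
  finally have S: "(\<Sum>s\<in>insert a V \<rightarrow>\<^sub>E A. cp (F s) (a # zs)) = of_nat m * (\<Sum>g\<in>V \<rightarrow>\<^sub>E A. cp (F g) zs)" .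
  have card: "card (set (a # zs)) = Suc (card V)" using aV V_def by simp
  have setaz: "set (a # zs) = insert a V" using V_def by simp
  show ?thesis
  proof (cases "m = 0")
    case True
    have c1: "(0::complex) ^ card (set zs) = 0" using zs by (simp add: power_0_left)
    have c2: "(0::complex) ^ card (insert a (set zs)) = 0" by (simp add: power_0_left)
    show ?thesis using True unfolding Wl_def by (simp add: c1 c2)
  next
    case False
    show ?thesis unfolding Wl_def setaz card
      unfolding A_def[symmetric] V_def[symmetric] F_def[symmetric] S
      using False card setaz by (simp add: field_simps)
  qed
qed

lemma del_facts:
  assumes "i < length xs" "2 \<le> length xs"
  shows "Wl n m B xs = Wl n m B (xs!i # rotate i (del i xs))"
    "Wl n m B (del i xs) = Wl n m B (rotate i (del i xs))"
    "set (del i xs) = set (rotate i (del i xs))"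
    "set xs = insert (xs!i) (set (rotate i (del i xs)))"
    "rotate i (del i xs) \<noteq> []"
    "length (filter P xs) = length (filter P (xs!i # rotate i (del i xs)))"
proof -
  have r: "rotate i xs = xs!i # rotate i (del i xs)" by (rule rotate_del[OF assms(1)])
  show "Wl n m B xs = Wl n m B (xs!i # rotate i (del i xs))" using Wl_rotate[of n m B i xs] r by simp
  show "Wl n m B (del i xs) = Wl n m B (rotate i (del i xs))" by (simp add: Wl_rotate)
  show "set (del i xs) = set (rotate i (del i xs))" by simp
  show "set xs = insert (xs!i) (set (rotate i (del i xs)))" using arg_cong[OF r, of set] by simp
  have "length (rotate i (del i xs)) = length xs - 1" using length_del[OF assms(1)] by simp
  then show "rotate i (del i xs) \<noteq> []" using assms(2) by (intro notI) simp
  show "length (filter P xs) = length (filter P (xs!i # rotate i (del i xs)))"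
    using length_filter_rotate[of P i xs] r by simp
qed

lemma move1a_facts:
  assumes mu: "mutually_unbiased n m B" and L: "2 \<le> length xs" and i: "i < length xs"
    and eq: "xs!i = xs!(Suc i mod length xs)"
  shows "Wl n m B xs = Wl n m B (del i xs)" "set (del i xs) = set xs"
proof -
  define zs where "zs = rotate i (del i xs)"
  note f = del_facts[OF i L, folded zs_def]
  have r: "rotate i xs = xs!i # zs" unfolding zs_def by (rule rotate_del[OF i])
  have "hd zs = rotate i xs ! 1" using r f(5) by (simp add: hd_conv_nth)
  also have "\<dots> = xs ! ((i + 1) mod length xs)" using L by (simp add: nth_rotate)
  finally have hd: "xs!i = hd zs" using eq by simp
  have "Wl n m B (xs!i # zs) = Wl n m B zs" using Wl_H1[OF mu f(5)] hd by simp
  then show "Wl n m B xs = Wl n m B (del i xs)" using f(1,2) by simp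
  show "set (del i xs) = set xs" using f(3,4,5) hd by auto
qed

lemma move1b_facts:
  assumes mu: "mutually_unbiased n m B" and L: "2 \<le> length xs" and i: "i < length xs"
    and eq: "xs!i = xs!(Suc i mod length xs)"
  shows "Wl n m B xs = Wl n m B (del (Suc i mod length xs) xs)" "set (del (Suc i mod length xs) xs) = set xs"
proof -
  define j where "j = Suc i mod length xs"
  have j: "j < length xs" using i unfolding j_def by (intro mod_less_divisor) auto
  define zs where "zs = rotate j (del j xs)"
  note f = del_facts[OF j L, folded zs_def]
  have r: "rotate j xs = xs!j # zs" unfolding zs_def by (rule rotate_del[OF j])
  have lz: "length zs = length xs - 1" using arg_cong[OF r, of length] by simp
  have "last zs = rotate j xs ! (length xs - 1)" using r f(5) lz L
    by (simp add: last_conv_nth)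
  also have "\<dots> = xs ! ((j + (length xs - 1)) mod length xs)" using L by (simp add: nth_rotate)
  also have "(j + (length xs - 1)) mod length xs = i"
  proof (cases "Suc i < length xs")
    case True
    then have "j = Suc i" using j_def by simp
    then have "j + (length xs - 1) = i + length xs" using L by simp
    then show ?thesis using i by simp
  next
    case False
    then have si: "Suc i = length xs" using i by simp
    then have "j = 0" "i = length xs - 1" using j_def by auto
    then show ?thesis using i by simp
  qed
  finally have last: "xs!j = last zs" using eq j_def by simp
  have "Wl n m B (xs!j # zs) = Wl n m B zs" using Wl_H1[OF mu f(5)] last by simp
  then show "Wl n m B xs = Wl n m B (del j xs)" using f(1,2) by simp
  show "set (del j xs) = set xs" using f(3,4,5) last by auto
qed

lemma move2_facts:
  assumes mu: "mutually_unbiased n m B" and L: "2 \<le> length xs" and i: "i < length xs"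
    and c: "length (filter (\<lambda>y. y = xs!i) xs) = 1"
  shows "Wl n m B xs = Wl n m B (del i xs) / of_nat n" "card (set xs) = Suc (card (set (del i xs)))"
    "del i xs \<noteq> []"
proof -
  define zs where "zs = rotate i (del i xs)"
  note f = del_facts[OF i L, folded zs_def]
  have "length (filter (\<lambda>y. y = xs!i) zs) = 0" using f(6)[of "\<lambda>y. y = xs!i"] c by simp
  then have nin: "xs!i \<notin> set zs" by (auto simp add: filter_empty_conv)
  show "Wl n m B xs = Wl n m B (del i xs) / of_nat n" using Wl_H2[OF mu f(5) nin] f(1,2) by simp
  show "card (set xs) = Suc (card (set (del i xs)))" using f(3,4) nin by simp
  show "del i xs \<noteq> []" using f(5) zs_def by auto
qed

lemma reducible_ne: "reducible xs \<Longrightarrow> xs \<noteq> []"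
  by (induction rule: reducible.induct) auto

lemma gamma_value:
  assumes mu: "mutually_unbiased n m B" and n: "n > 0" and m: "m > 0"
  shows "reducible xs \<Longrightarrow> Wl n m B xs = 1 / of_nat n ^ (card (set xs) - 1)"
proof (induction rule: reducible.induct)
  case (base xs)
  then obtain a where xs: "xs = [a]" by (cases xs) auto
  have cp1: "cp (\<lambda>x y. cinner n (Bv B s x) (Bv B s y)) [a] = 1"
    if "s \<in> {a} \<rightarrow>\<^sub>E ({..<m} \<times> {..<n})" for s
  proof -
    have "s a \<in> {..<m} \<times> {..<n}" using that by blast
    then show ?thesis unfolding cp_def Bv_def using self_inner[OF mu] by simp
  qed
  have "(\<Sum>s\<in>{a} \<rightarrow>\<^sub>E ({..<m} \<times> {..<n}). cp (\<lambda>x y. cinner n (Bv B s x) (Bv B s y)) [a])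
     = of_nat (card ({a} \<rightarrow>\<^sub>E ({..<m} \<times> {..<n})))"
    using cp1 by simp
  also have "card ({a} \<rightarrow>\<^sub>E ({..<m} \<times> {..<n})) = m * n" by (simp add: card_PiE card_cartesian_product)
  finally show ?case unfolding xs Wl_def using n m by simp
next
  case (move1a xs i)
  then show ?case using move1a_facts[OF mu move1a(1,2,3)] by simp
next
  case (move1b xs i)
  then show ?case using move1b_facts[OF mu move1b(1,2,3)] by simp
next
  case (move2 xs i)
  note f = move2_facts[OF mu move2(1,2,3)]
  have "card (set (del i xs)) \<noteq> 0" using f(3) by simp
  then obtain c where c: "card (set (del i xs)) = Suc c" using not0_implies_Suc by blast
  show ?case using f(1,2) move2(5) c by simp
qed

lemma suc_mod_lt: "i < (L::nat) \<Longrightarrow> Suc i mod L < L"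
proof -
  assume "i < L" then have "0 < L" by simp
  then show ?thesis by (rule mod_less_divisor)
qed

lemma nth_suc_mem: "i < length xs \<Longrightarrow> xs!(Suc i mod length xs) \<in> set xs"
  by (rule nth_mem, rule suc_mod_lt)

lemma exit_pos:
  assumes "j < L" "P j" "k < L" "\<not> P k"
  shows "\<exists>i<L. P i \<and> \<not> P (Suc i mod L)"
proof (rule ccontr)
  assume "\<not> ?thesis"
  then have step: "\<And>i. i < L \<Longrightarrow> P i \<Longrightarrow> P (Suc i mod L)" by blast
  have "P ((j + t) mod L)" for t
  proof (induction t)
    case 0 then show ?case using assms by simp
  next
    case (Suc t)
    have "(j + t) mod L < L" using assms(1) by simp
    then have "P (Suc ((j + t) mod L) mod L)" using step Suc by blast
    then show ?case by (simp add: mod_Suc_eq)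
  qed
  from this[of "L - j + k"] have "P ((L + k) mod L)" using assms(1) by simp
  then show False using assms(3,4) by simp
qed

lemma L_ge:
  assumes cnt: "\<forall>x\<in>set xs. 2 \<le> card {i. i < length xs \<and> xs!i = x}"
  shows "2 * card (set xs) \<le> length xs"
proof -
  have img: "(\<lambda>i. xs!i) ` {..<length xs} \<subseteq> set xs" by auto
  have "length xs = (\<Sum>i<length xs. (1::nat))" by simp
  also have "\<dots> = (\<Sum>x\<in>set xs. \<Sum>i\<in>{i. i \<in> {..<length xs} \<and> xs!i = x}. 1)"
    by (rule sum.group[symmetric, OF _ _ img]) auto
  also have "\<dots> = (\<Sum>x\<in>set xs. card {i. i < length xs \<and> xs!i = x})" by simp
  also have "\<dots> \<ge> (\<Sum>x\<in>set xs. 2)" using cnt by (intro sum_mono) auto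
  finally show ?thesis by simp
qed

lemma inj_case:
  assumes ne: "\<forall>i<length xs. xs!i \<noteq> xs!(Suc i mod length xs)" and inj: "inj_on s (set xs)"
  shows "{i. i < length xs \<and> s (xs!i) \<noteq> s (xs!(Suc i mod length xs))} = {..<length xs}"
proof -
  have "s (xs!i) \<noteq> s (xs!(Suc i mod length xs))" if "i < length xs" for i
  proof
    assume "s (xs!i) = s (xs!(Suc i mod length xs))"
    moreover have "xs!i \<in> set xs" "xs!(Suc i mod length xs) \<in> set xs" using that
      by (auto intro!: nth_mem nth_suc_mem)
    ultimately have "xs!i = xs!(Suc i mod length xs)" using inj by (meson inj_onD)
    then show False using ne that by blast
  qed
  then show ?thesis by auto
qed

lemma comb:
  assumes L2: "2 \<le> length xs" and ne: "\<forall>i<length xs. xs!i \<noteq> xs!(Suc i mod length xs)"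
    and cnt: "\<forall>x\<in>set xs. 2 \<le> card {i. i < length xs \<and> xs!i = x}"
  shows "3 * card (s ` set xs) \<le> card {i. i < length xs \<and> s (xs!i) \<noteq> s (xs!(Suc i mod length xs))} + card (set xs) + 1"
proof -
  define L where "L = length xs"
  define V where "V = set xs"
  define D where "D = {i. i < L \<and> s (xs!i) \<noteq> s (xs!(Suc i mod L))}"
  define R where "R = s ` V"
  have finV: "finite V" and finR: "finite R" and finD: "finite D" unfolding V_def R_def D_def by auto
  have "xs!0 \<noteq> xs!1" using ne L2 by (metis One_nat_def Suc_1 less_le_trans mod_less pos2 Suc_le_lessD)
  moreover have "xs!0 \<in> V" "xs!1 \<in> V" using L2 unfolding V_def by (auto intro!: nth_mem)
  ultimately have "card {xs!0, xs!1} \<le> card V" by (intro card_mono finV) auto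
  then have v2: "2 \<le> card V" using \<open>xs!0 \<noteq> xs!1\<close> by simp
  show ?thesis
  proof (cases "card R \<le> 1")
    case True
    then show ?thesis using v2 unfolding R_def V_def by linarith
  next
    case False
    have per: "3 \<le> card {x. x \<in> V \<and> s x = y} + card {i. i \<in> D \<and> s (xs!i) = y}" if y: "y \<in> R" for y
    proof -
      obtain x0 where x0: "x0 \<in> V" "y = s x0" using y R_def by blast
      obtain j where j: "j < L" "xs!j = x0" using x0 V_def L_def by (metis in_set_conv_nth)
      have "\<exists>y'\<in>R. y' \<noteq> y"
      proof (rule ccontr)
        assume "\<not> ?thesis"
        then have "R \<subseteq> {y}" by blast
        then have "card R \<le> 1" using card_mono[of "{y}" R] by simp
        then show False using False by simp
      qed
      then obtain k where k: "k < L" "s (xs!k) \<noteq> y" using R_def V_def L_def by (metis imageE in_set_conv_nth)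
      obtain i where i: "i < L" "s (xs!i) = y" "s (xs!(Suc i mod L)) \<noteq> y"
        using exit_pos[of j L "\<lambda>i. s (xs!i) = y" k] j k x0 by blast
      have finDy: "finite {i. i \<in> D \<and> s (xs!i) = y}" using finD by simp
      have finFy: "finite {x. x \<in> V \<and> s x = y}" using finV by simp
      have "i \<in> {i. i \<in> D \<and> s (xs!i) = y}" using i D_def by auto
      then have d1: "1 \<le> card {i. i \<in> D \<and> s (xs!i) = y}" using finDy
        by (metis One_nat_def Suc_leI card_gt_0_iff empty_iff)
      have x0F: "x0 \<in> {x. x \<in> V \<and> s x = y}" using x0 by simp
      then have f1: "1 \<le> card {x. x \<in> V \<and> s x = y}" using finFy
        by (metis One_nat_def Suc_leI card_gt_0_iff empty_iff)
      show ?thesis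
      proof (cases "2 \<le> card {x. x \<in> V \<and> s x = y}")
        case True then show ?thesis using d1 by linarith
      next
        case False
        then have "card {x. x \<in> V \<and> s x = y} = 1" using f1 by simp
        then have F1: "{x. x \<in> V \<and> s x = y} = {x0}" using x0F by (metis card_1_singletonE singletonD)
        have sub: "{i. i < L \<and> xs!i = x0} \<subseteq> {i. i \<in> D \<and> s (xs!i) = y}"
        proof
          fix t assume t: "t \<in> {i. i < L \<and> xs!i = x0}"
          then have t1: "t < L" "xs!t = x0" by auto
          have sy: "s (xs!t) = y" using t1 x0 by simp
          have "s (xs!(Suc t mod L)) \<noteq> y"
          proof
            assume "s (xs!(Suc t mod L)) = y"
            moreover have "xs!(Suc t mod L) \<in> V" using t1 V_def L_def nth_suc_mem by auto
            ultimately have "xs!(Suc t mod L) \<in> {x. x \<in> V \<and> s x = y}" by simp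
            then have "xs!(Suc t mod L) = xs!t" using F1 t1 by simp
            then show False using ne t1 L_def by metis
          qed
          then show "t \<in> {i. i \<in> D \<and> s (xs!i) = y}" using t1 sy D_def by simp
        qed
        have "2 \<le> card {i. i < L \<and> xs!i = x0}" using cnt x0 V_def L_def by simp
        also have "\<dots> \<le> card {i. i \<in> D \<and> s (xs!i) = y}" by (rule card_mono[OF finDy sub])
        finally show ?thesis using f1 by linarith
      qed
    qed
    have sV: "(\<Sum>y\<in>R. card {x. x \<in> V \<and> s x = y}) = card V"
      using sum.group[OF finV finR, of s "\<lambda>_. (1::nat)"] R_def by simp
    have imgD: "(\<lambda>i. s (xs!i)) ` D \<subseteq> R" unfolding D_def R_def V_def L_def by auto
    have sD: "(\<Sum>y\<in>R. card {i. i \<in> D \<and> s (xs!i) = y}) = card D"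
      using sum.group[OF finD finR imgD, of "\<lambda>_. (1::nat)"] by simp
    have "3 * card R = (\<Sum>y\<in>R. 3)" by simp
    also have "\<dots> \<le> (\<Sum>y\<in>R. card {x. x \<in> V \<and> s x = y} + card {i. i \<in> D \<and> s (xs!i) = y})"
      using per by (intro sum_mono) auto
    also have "\<dots> = card V + card D" using sV sD by (simp add: sum.distrib)
    finally show ?thesis unfolding R_def V_def D_def L_def by linarith
  qed
qed

lemma per_s_bound:
  fixes q :: real and m n r v d :: nat
  assumes q1: "1 \<le> q" and qn: "q^2 = real n" and qm: "q \<le> real m" and rv: "r \<le> v"
    and c3: "3*r \<le> d + v + 1" and inj: "r = v \<Longrightarrow> 2*v \<le> d"
  shows "(real m * real n)^r \<le> (real m^(v-1) * real n + real m^v) * q^d"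
proof -
  have m0: "0 \<le> real m" by simp
  have nr: "real n ^ r = q^(2*r)" using qn by (metis power_mult)
  have mn: "(real m * real n)^r = real m^r * q^(2*r)"
    using nr by (simp add: power_mult_distrib)
  show ?thesis
  proof (cases "r = v")
    case True
    have "q^(2*r) \<le> q^d" using inj True q1 by (intro power_increasing) auto
    then have "real m^r * q^(2*r) \<le> real m^v * q^d" using True by (simp add: mult_left_mono)
    also have "\<dots> \<le> (real m^(v-1) * real n + real m^v) * q^d" using q1
      by (intro mult_right_mono) auto
    finally show ?thesis using mn by simp
  next
    case False
    then have rl: "r < v" using rv by simp
    have "q^(2*r) \<le> q^((v-1-r) + 2 + d)" using q1 c3 rl by (intro power_increasing) auto
    also have "\<dots> = q^(v-1-r) * q^2 * q^d" by (simp only: power_add)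
    also have "\<dots> \<le> real m^(v-1-r) * real n * q^d"
    proof -
      have "q^(v-1-r) \<le> real m^(v-1-r)" using q1 qm by (intro power_mono) auto
      then have "q^(v-1-r) * q^2 \<le> real m^(v-1-r) * real n" using qn by (simp add: mult_right_mono)
      then show ?thesis using q1 by (intro mult_right_mono) auto
    qed
    finally have "real m^r * q^(2*r) \<le> real m^r * (real m^(v-1-r) * real n * q^d)"
      by (intro mult_left_mono) auto
    also have "\<dots> = real m^(r + (v-1-r)) * real n * q^d" by (simp add: power_add mult_ac)
    also have "r + (v-1-r) = v - 1" using rl by simp
    also have "real m^(v-1) * real n * q^d \<le> (real m^(v-1) * real n + real m^v) * q^d"
      using q1 by (intro mult_right_mono) auto
    finally show ?thesis using mn by simp
  qed
qed

lemma count_images: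
  assumes "finite V" "finite A"
  shows "card {s \<in> V \<rightarrow>\<^sub>E A. card (s ` V) = r} \<le> card A ^ r * r ^ card V"
proof -
  have sub: "{s \<in> V \<rightarrow>\<^sub>E A. card (s ` V) = r} \<subseteq> (\<Union>T\<in>{T. T \<subseteq> A \<and> card T = r}. V \<rightarrow>\<^sub>E T)"
  proof
    fix s assume s: "s \<in> {s \<in> V \<rightarrow>\<^sub>E A. card (s ` V) = r}"
    then have "s \<in> V \<rightarrow>\<^sub>E s ` V" "s ` V \<subseteq> A" by (auto simp: PiE_def)
    then show "s \<in> (\<Union>T\<in>{T. T \<subseteq> A \<and> card T = r}. V \<rightarrow>\<^sub>E T)" using s by blast
  qed
  have finT: "finite {T. T \<subseteq> A \<and> card T = r}" using assms(2) by simp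
  have "card {s \<in> V \<rightarrow>\<^sub>E A. card (s ` V) = r} \<le> card (\<Union>T\<in>{T. T \<subseteq> A \<and> card T = r}. V \<rightarrow>\<^sub>E T)"
    by (rule card_mono[OF _ sub]) (use finT assms in \<open>auto intro!: finite_PiE dest: finite_subset\<close>)
  also have "\<dots> \<le> (\<Sum>T\<in>{T. T \<subseteq> A \<and> card T = r}. card (V \<rightarrow>\<^sub>E T))"
    by (rule card_UN_le[OF finT])
  also have "\<dots> = (\<Sum>T\<in>{T. T \<subseteq> A \<and> card T = r}. r ^ card V)"
    using assms by (intro sum.cong refl) (simp add: card_PiE)
  also have "\<dots> = (card A choose r) * r ^ card V" using n_subsets[OF assms(2)] by simp
  also have "\<dots> \<le> card A ^ r * r ^ card V"
  proof (cases "r \<le> card A")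
    case True then show ?thesis by (intro mult_right_mono binomial_le_pow) auto
  next
    case False then show ?thesis by (simp add: binomial_eq_0)
  qed
  finally show ?thesis .
qed

lemma sum_inv_images:
  assumes finV: "finite V" and finA: "finite A" and N: "card A > 0"
  shows "(\<Sum>s\<in>V \<rightarrow>\<^sub>E A. 1 / real (card A) ^ card (s ` V)) \<le> real ((card V + 1) * card V ^ card V)"
proof -
  define P where "P = V \<rightarrow>\<^sub>E A"
  have finP: "finite P" unfolding P_def using finV finA by (simp add: finite_PiE)
  have img: "(\<lambda>s. card (s ` V)) ` P \<subseteq> {..card V}" using card_image_le[OF finV] by auto
  have "(\<Sum>s\<in>P. 1 / real (card A) ^ card (s ` V))
      = (\<Sum>r\<in>{..card V}. \<Sum>s\<in>{s. s \<in> P \<and> card (s ` V) = r}. 1 / real (card A) ^ card (s ` V))"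
    by (rule sum.group[symmetric, OF finP _ img]) simp
  also have "\<dots> \<le> (\<Sum>r\<in>{..card V}. real (card V ^ card V))"
  proof (intro sum_mono)
    fix r assume r: "r \<in> {..card V}"
    have "(\<Sum>s\<in>{s. s \<in> P \<and> card (s ` V) = r}. 1 / real (card A) ^ card (s ` V))
        = real (card {s. s \<in> P \<and> card (s ` V) = r}) / real (card A) ^ r" by simp
    also have "\<dots> \<le> real (card A ^ r * r ^ card V) / real (card A) ^ r"
      using of_nat_mono[OF count_images[OF finV finA, of r]] unfolding P_def
      by (intro divide_right_mono) simp_all
    also have "\<dots> = real (r ^ card V)" using N by simp
    also have "\<dots> \<le> real (card V ^ card V)" using r by (simp add: power_mono)
    finally show "(\<Sum>s\<in>{s. s \<in> P \<and> card (s ` V) = r}. 1 / real (card A) ^ card (s ` V)) \<le> real (card V ^ card V)" .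
  qed
  also have "\<dots> = real ((card V + 1) * card V ^ card V)" by (simp add: algebra_simps)
  finally show ?thesis unfolding P_def .
qed

lemma prod_if_const:
  assumes "finite S"
  shows "(\<Prod>i\<in>S. if P i then 1 else (c::real)) = c ^ card {i \<in> S. \<not> P i}"
proof -
  have "(\<Prod>i\<in>S. if P i then 1 else c) = prod (\<lambda>_. 1) (S \<inter> {x. P x}) * prod (\<lambda>_. c) (S \<inter> - {x. P x})"
    by (rule prod.If_cases[OF assms])
  also have "S \<inter> - {x. P x} = {i \<in> S. \<not> P i}" by auto
  finally show ?thesis by simp
qed

lemma core:
  assumes mu: "mutually_unbiased n m B" and n2: "2 \<le> n" and m1: "1 \<le> m" and sm: "sqrt (real n) \<le> real m"
    and L2: "2 \<le> length xs" and ne: "\<forall>i<length xs. xs!i \<noteq> xs!(Suc i mod length xs)"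
    and cnt: "\<forall>x\<in>set xs. 2 \<le> card {i. i < length xs \<and> xs!i = x}"
  shows "cmod (Wl n m B xs) \<le> real ((card (set xs) + 1) * card (set xs) ^ card (set xs))
            * (real n / real n ^ card (set xs)) * (1 / real m + 1 / real n)"
proof -
  define V where "V = set xs"
  define v where "v = card V"
  define A where "A = {..<m} \<times> {..<n}"
  define L where "L = length xs"
  define q where "q = sqrt (real n)"
  define M where "M = real m^(v-1) * real n + real m^v"
  define K where "K = real ((v + 1) * v ^ v)"
  define F where "F s = (\<lambda>x y. cinner n (Bv B s x) (Bv B s y))" for s
  define D where "D s = {i. i < L \<and> s (xs!i) \<noteq> s (xs!(Suc i mod L))}" for s :: "nat \<Rightarrow> nat \<times> nat"
  have finV: "finite V" and finA: "finite A" unfolding V_def A_def by auto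
  have cardA: "card A = m * n" unfolding A_def by (simp add: card_cartesian_product)
  have q1: "1 \<le> q" unfolding q_def using n2 by simp
  have qn: "q^2 = real n" unfolding q_def by simp
  have qm: "q \<le> real m" using sm q_def by simp
  have v2: "2 \<le> v"
  proof -
    have "xs!0 \<noteq> xs!1" using ne L2 by (metis One_nat_def Suc_1 less_le_trans mod_less pos2 Suc_le_lessD)
    moreover have "xs!0 \<in> V" "xs!1 \<in> V" using L2 unfolding V_def by (auto intro!: nth_mem)
    ultimately have "card {xs!0, xs!1} \<le> card V" by (intro card_mono finV) auto
    then show ?thesis using \<open>xs!0 \<noteq> xs!1\<close> v_def by simp
  qed
  have Lv: "2 * v \<le> L" using L_ge[OF cnt] V_def v_def L_def by simp
  have tbound: "cmod (cp (F s) xs) \<le> M / (real m * real n) ^ card (s ` V)" if s: "s \<in> V \<rightarrow>\<^sub>E A" for s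
  proof -
    have sA: "\<And>x. x \<in> V \<Longrightarrow> s x \<in> A" using s by blast
    have "cmod (cp (F s) xs) = (\<Prod>i<L. cmod (F s (xs!i) (xs!(Suc i mod L))))"
      unfolding cp_def L_def by (simp add: prod_norm)
    also have "\<dots> \<le> (\<Prod>i<L. if s (xs!i) = s (xs!(Suc i mod L)) then 1 else 1 / q)"
    proof (intro prod_mono conjI)
      fix i assume i: "i \<in> {..<L}"
      have a: "s (xs!i) \<in> A" "s (xs!(Suc i mod L)) \<in> A"
        using i sA nth_suc_mem[of i xs] unfolding V_def L_def by auto
      show "cmod (F s (xs!i) (xs!(Suc i mod L))) \<le> (if s (xs!i) = s (xs!(Suc i mod L)) then 1 else 1 / q)"
        using entry_bound[OF mu a[unfolded A_def]] unfolding F_def Bv_def q_def by simp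
    qed simp
    also have "\<dots> = (1/q) ^ card (D s)"
      unfolding prod_if_const[OF finite_lessThan] D_def by simp
    also have "\<dots> \<le> M / (real m * real n) ^ card (s ` V)"
    proof -
      define r where "r = card (s ` V)"
      have rv: "r \<le> v" unfolding r_def v_def by (rule card_image_le[OF finV])
      have c3: "3 * r \<le> card (D s) + v + 1"
        using comb[OF L2 ne cnt, of s] unfolding r_def v_def V_def D_def L_def by simp
      have inj: "2 * v \<le> card (D s)" if "r = v"
      proof -
        have "inj_on s V" using that finV unfolding r_def v_def by (simp add: inj_on_iff_eq_card)
        then have "D s = {..<L}" using inj_case[OF ne, of s] unfolding D_def V_def L_def by simp
        then show ?thesis using Lv by simp
      qed
      have b: "(real m * real n)^r \<le> M * q^card (D s)"
        unfolding M_def by (rule per_s_bound[OF q1 qn qm rv c3 inj])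
      have pos: "0 < (real m * real n)^r" using m1 n2 by simp
      have qp: "0 < q^card (D s)" using q1 by simp
      have "(1/q)^card (D s) = 1 / q^card (D s)" by (simp add: power_one_over)
      also have "\<dots> \<le> M / (real m * real n)^r" using b pos qp by (simp add: field_simps)
      finally show ?thesis unfolding r_def .
    qed
    finally show ?thesis .
  qed
  have "cmod (\<Sum>s\<in>V \<rightarrow>\<^sub>E A. cp (F s) xs) \<le> (\<Sum>s\<in>V \<rightarrow>\<^sub>E A. cmod (cp (F s) xs))"
    by (rule norm_sum)
  also have "\<dots> \<le> (\<Sum>s\<in>V \<rightarrow>\<^sub>E A. M * (1 / real (card A) ^ card (s ` V)))"
    using tbound cardA by (intro sum_mono) simp
  also have "\<dots> = M * (\<Sum>s\<in>V \<rightarrow>\<^sub>E A. 1 / real (card A) ^ card (s ` V))"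
    by (simp add: sum_distrib_left)
  also have "\<dots> \<le> M * K"
  proof (rule mult_left_mono)
    have "card A > 0" using cardA m1 n2 by simp
    then show "(\<Sum>s\<in>V \<rightarrow>\<^sub>E A. 1 / real (card A) ^ card (s ` V)) \<le> K"
      unfolding K_def v_def by (rule sum_inv_images[OF finV finA])
    show "0 \<le> M" unfolding M_def by simp
  qed
  finally have S: "cmod (\<Sum>s\<in>V \<rightarrow>\<^sub>E A. cp (F s) xs) \<le> M * K" .
  have "cmod (Wl n m B xs) = cmod (\<Sum>s\<in>V \<rightarrow>\<^sub>E A. cp (F s) xs) / (real m * real n) ^ v"
    unfolding Wl_def V_def[symmetric] A_def[symmetric] F_def[symmetric] v_def[symmetric]
    by (simp add: norm_divide norm_power norm_mult)
  also have "\<dots> \<le> M * K / (real m * real n) ^ v"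
    using S m1 n2 by (intro divide_right_mono) auto
  also have "M * K / (real m * real n) ^ v = K * (real n / real n ^ v) * (1 / real m + 1 / real n)"
  proof -
    obtain w where w: "v = Suc w" using v2 by (cases v) auto
    have e: "M / (real m * real n) ^ v = (real n / real n ^ v) * (1 / real m + 1 / real n)"
      unfolding M_def w using m1 n2 by (simp add: field_simps power_mult_distrib)
    have "M * K / (real m * real n) ^ v = K * (M / (real m * real n) ^ v)"
      by (simp add: mult.commute times_divide_eq_right)
    then show ?thesis using e by (simp add: mult.assoc)
  qed
  finally show ?thesis unfolding K_def v_def V_def .
qed

lemma bound_mono:
  assumes "a \<le> b" "0 \<le> X" "c \<le> real a * X"
  shows "c \<le> real b * X"
  using assms by (meson of_nat_le_iff mult_right_mono order_trans)

lemma pow_mono_L: "(L::nat)^L \<le> (L+1)^(L+1)"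
proof -
  have "L^L \<le> (L+1)^L" by (rule power_mono) auto
  also have "\<dots> \<le> (L+1)^(L+1)" by (rule power_increasing) auto
  finally show ?thesis .
qed

lemma nongamma:
  assumes mu: "mutually_unbiased n m B" and n2: "2 \<le> n" and m1: "1 \<le> m" and sm: "sqrt (real n) \<le> real m"
  shows "\<not> reducible xs \<Longrightarrow> 1 \<le> length xs \<Longrightarrow> cmod (Wl n m B xs) \<le> real ((length xs + 1)^(length xs + 1))
            * (real n / real n ^ card (set xs)) * (1 / real m + 1 / real n)"
proof (induction "length xs" arbitrary: xs rule: less_induct)
  case less
  define L where "L = length xs"
  define X where "X = (real n / real n ^ card (set xs)) * (1 / real m + 1 / real n)"
  have X0: "0 \<le> X" unfolding X_def by simp
  have L2: "2 \<le> L"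
  proof (rule ccontr)
    assume "\<not> 2 \<le> L"
    then have "length xs = 1" using less.prems L_def by simp
    then show False using less.prems reducible.base by blast
  qed
  show ?case
  proof (cases "\<exists>i<L. xs!i = xs!(Suc i mod L)")
    case True
    then obtain i where i: "i < L" "xs!i = xs!(Suc i mod L)" by blast
    have nr: "\<not> reducible (del i xs)" using less.prems(1) reducible.move1a[of xs i] i L2 L_def by blast
    have ld: "length (del i xs) = L - 1" using length_del i L_def by simp
    note f = move1a_facts[OF mu L2[unfolded L_def] i[unfolded L_def]]
    have IH: "cmod (Wl n m B (del i xs)) \<le> real ((length (del i xs) + 1)^(length (del i xs) + 1))
            * (real n / real n ^ card (set (del i xs))) * (1 / real m + 1 / real n)"
      using less.hyps[of "del i xs"] nr ld L2 L_def by simp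
    have "cmod (Wl n m B xs) \<le> real (L^L) * X"
      using IH f ld L2 unfolding X_def by (simp add: mult.assoc)
    then show ?thesis using bound_mono[OF pow_mono_L X0] unfolding X_def L_def by (simp add: mult.assoc)
  next
    case nomove1: False
    show ?thesis
    proof (cases "\<exists>i<L. length (filter (\<lambda>y. y = xs!i) xs) = 1")
      case True
      then obtain i where i: "i < L" "length (filter (\<lambda>y. y = xs!i) xs) = 1" by blast
      have nr: "\<not> reducible (del i xs)" using less.prems(1) reducible.move2[of xs i] i L2 L_def by blast
      have ld: "length (del i xs) = L - 1" using length_del i L_def by simp
      note f = move2_facts[OF mu L2[unfolded L_def] i[unfolded L_def]]
      have IH: "cmod (Wl n m B (del i xs)) \<le> real ((length (del i xs) + 1)^(length (del i xs) + 1))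
              * (real n / real n ^ card (set (del i xs))) * (1 / real m + 1 / real n)"
        using less.hyps[of "del i xs"] nr ld L2 L_def by simp
      have "cmod (Wl n m B xs) = cmod (Wl n m B (del i xs)) / real n"
        using f(1) by (simp add: norm_divide)
      also have "\<dots> \<le> real (L^L) * (real n / real n ^ card (set (del i xs))) * (1 / real m + 1 / real n) / real n"
        using IH ld L2 n2 by (intro divide_right_mono) auto
      also have "\<dots> = real (L^L) * X"
        unfolding X_def f(2) using n2 by (simp add: field_simps)
      finally have "cmod (Wl n m B xs) \<le> real (L^L) * X" .
      then show ?thesis using bound_mono[OF pow_mono_L X0] unfolding X_def L_def by (simp add: mult.assoc)
    next
      case False
      have ne: "\<forall>i<length xs. xs!i \<noteq> xs!(Suc i mod length xs)" using nomove1 L_def by blast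
      have cnt: "\<forall>x\<in>set xs. 2 \<le> card {i. i < length xs \<and> xs!i = x}"
      proof
        fix x assume "x \<in> set xs"
        then obtain i where i: "i < L" "xs!i = x" unfolding L_def by (metis in_set_conv_nth)
        have c: "length (filter (\<lambda>y. y = x) xs) = card {j. j < length xs \<and> xs!j = x}"
          by (rule length_filter_conv_card)
        have "i \<in> {j. j < length xs \<and> xs!j = x}" using i L_def by simp
        then have "card {j. j < length xs \<and> xs!j = x} \<noteq> 0" by auto
        moreover have "card {j. j < length xs \<and> xs!j = x} \<noteq> 1" using False i c by auto
        ultimately show "2 \<le> card {i. i < length xs \<and> xs!i = x}" by linarith
      qed
      have c: "cmod (Wl n m B xs) \<le> real ((card (set xs) + 1) * card (set xs) ^ card (set xs)) * X"
        using core[OF mu n2 m1 sm L2[unfolded L_def] ne cnt] unfolding X_def by (simp add: mult.assoc)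
      have vL: "card (set xs) \<le> L" unfolding L_def by (rule card_length)
      have "(card (set xs) + 1) * card (set xs) ^ card (set xs) \<le> (L+1) * (L+1)^L"
      proof (rule mult_mono)
        have "card (set xs) ^ card (set xs) \<le> (L+1) ^ card (set xs)" using vL by (intro power_mono) auto
        also have "\<dots> \<le> (L+1)^L" using vL by (intro power_increasing) auto
        finally show "card (set xs) ^ card (set xs) \<le> (L+1)^L" .
      qed (use vL in auto)
      also have "\<dots> = (L+1)^(L+1)" by simp
      finally have "(card (set xs) + 1) * card (set xs) ^ card (set xs) \<le> (L+1)^(L+1)" .
      from bound_mono[OF this X0 c] show ?thesis unfolding X_def L_def by (simp add: mult.assoc)
    qed
  qed
qed

theorem lemma3:
  fixes l :: nat
  assumes "l \<ge> 1"
  shows "\<exists>C :: real. \<forall>(n::nat) (m::nat) (p::nat) (B :: nat \<Rightarrow> nat \<Rightarrow> nat \<Rightarrow> complex) (\<gamma> :: nat \<Rightarrow> nat).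
     n \<ge> 2 \<longrightarrow> m \<ge> 2 \<longrightarrow> real m \<ge> sqrt (real n) \<longrightarrow> mutually_unbiased n m B \<longrightarrow>
     p \<ge> 1 \<longrightarrow> closed_path p l \<gamma> \<longrightarrow>
     (if in_Gamma l \<gamma>
      then W n m B l \<gamma> = complex_of_real (real n powr (1 - real (vg l \<gamma>)))
      else cmod (W n m B l \<gamma>) \<le> C * (real n powr (1 - real (vg l \<gamma>))) * (1 / real m + 1 / real n))"
proof (intro exI allI impI)
  fix n m p :: nat and B :: "nat \<Rightarrow> nat \<Rightarrow> nat \<Rightarrow> complex" and \<gamma> :: "nat \<Rightarrow> nat"
  assume n2: "n \<ge> 2" and m2: "m \<ge> 2" and sm: "real m \<ge> sqrt (real n)" and mu: "mutually_unbiased n m B"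
    and "p \<ge> 1" and cl: "closed_path p l \<gamma>"
  define xs where "xs = map \<gamma> [0..<l]"
  have g0: "\<gamma> 0 = \<gamma> l" using cl unfolding closed_path_def by simp
  have lx: "length xs = l" unfolding xs_def by simp
  have setx: "set xs = Vg l \<gamma>"
  proof -
    have "{0..l} = insert l {0..<l}" by auto
    moreover have "\<gamma> l \<in> \<gamma> ` {0..<l}" using g0 assms by (metis atLeastLessThan_iff image_eqI le_numeral_extra(3) less_le_trans zero_less_one)
    ultimately show ?thesis unfolding xs_def Vg_def by auto
  qed
  have vv: "vg l \<gamma> = card (set xs)" unfolding vg_def setx ..
  have om: "omega n B l \<gamma> s = cp (\<lambda>a b. cinner n (Bv B s a) (Bv B s b)) xs" for s
  proof -
    have "\<gamma> (Suc i mod l) = \<gamma> (Suc i)" if "i < l" for i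
    proof (cases "Suc i < l")
      case True then show ?thesis by simp
    next
      case False then have "Suc i = l" using that by simp
      then show ?thesis using g0 by simp
    qed
    moreover have "xs ! (Suc i mod l) = \<gamma> (Suc i mod l)" if "i < l" for i
      unfolding xs_def using that assms by (simp add: suc_mod_lt)
    ultimately show ?thesis unfolding omega_def cp_def lx Bv_def using assms
      by (intro prod.cong refl) (simp add: xs_def)
  qed
  have WW: "W n m B l \<gamma> = Wl n m B xs"
    unfolding W_def Wl_def om vv setx[symmetric] ..
  have ne: "xs \<noteq> []" using lx assms by auto
  have v1: "card (set xs) \<ge> 1" using ne by (simp add: Suc_leI card_gt_0_iff)
  have n0: "real n > 0" using n2 by simp
  have pw: "real n powr (1 - real (card (set xs))) = real n / real n ^ card (set xs)"
    using n0 by (simp add: powr_diff powr_realpow)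
  show "if in_Gamma l \<gamma>
      then W n m B l \<gamma> = complex_of_real (real n powr (1 - real (vg l \<gamma>)))
      else cmod (W n m B l \<gamma>) \<le> real ((l+1)^(l+1)) * (real n powr (1 - real (vg l \<gamma>))) * (1 / real m + 1 / real n)"
  proof (cases "in_Gamma l \<gamma>")
    case True
    then have r: "reducible xs" unfolding in_Gamma_def xs_def .
    have "Wl n m B xs = 1 / of_nat n ^ (card (set xs) - 1)"
      using gamma_value[OF mu _ _ r] n2 m2 by simp
    moreover have "real n / real n ^ card (set xs) = 1 / real n ^ (card (set xs) - 1)"
    proof -
      obtain w where "card (set xs) = Suc w" using v1 by (cases "card (set xs)") auto
      then show ?thesis using n0 by simp
    qed
    ultimately show ?thesis using True unfolding WW vv pw by simp
  next
    case False
    then have r: "\<not> reducible xs" unfolding in_Gamma_def xs_def .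
    have "cmod (Wl n m B xs) \<le> real ((length xs + 1)^(length xs + 1))
            * (real n / real n ^ card (set xs)) * (1 / real m + 1 / real n)"
      using nongamma[OF mu n2 _ sm r] m2 lx assms by simp
    then show ?thesis using False unfolding WW vv pw lx by simp
  qed
qed

end
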